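(* Let $t>0$, let $X,Y\subset\mathbb{R}^D$ be finite sets and $Q=X\cap Y$. Then $X$ and $Y$ are magnitude-equivalent at scale $t$ if and only if $\mathbf{w}^t_X(z)=\mathbf{w}^t_Y(z)$ for all $z\in Q$, $\mathbf{w}^t_X(z)=0$ for all $z\in X\setminus Q$, and $\mathbf{w}^t_Y(z)=0$ for all $z\in Y\setminus Q$.
   Context: For a finite set $A\subset\mathbb{R}^D$ and $t>0$, the matrix $\zeta_{tA}(x,y)=\exp(-t\|x-y\|)$ ($x,y\in A$) is invertible and $\mathbf{w}^t_A=\zeta_{tA}^{-1}\mathbb{1}$ is the weighting vector of $A$ at scale $t$ (the unique vector with $\sum_{y\in A}\zeta_{tA}(x,y)\mathbf{w}^t_A(y)=1$ for all $x\in A$). Finite $X,Y\subset\mathbb{R}^D$ are magnitude-equivalent at scale $t$ if $\{x\in X:\mathbf{w}^t_X(x)\neq0\}=\{y\in Y:\mathbf{w}^t_Y(y)\neq0\}$. *)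

theory Defs
  imports "HOL-Analysis.Analysis"
begin

text \<open>Similarity kernel of the scaled set tA: zeta(x,y) = exp(-t * norm(x - y)).\<close>
definition zeta :: "real \<Rightarrow> real^'n \<Rightarrow> real^'n \<Rightarrow> real" where
  "zeta t x y = exp (- t * norm (x - y))"

definition weighting :: "real \<Rightarrow> (real^'n) set \<Rightarrow> real^'n \<Rightarrow> real" where
  "weighting t A = (THE w. (\<forall>x\<in>A. (\<Sum>y\<in>A. zeta t x y * w y) = 1) \<and> (\<forall>x. x \<notin> A \<longrightarrow> w x = 0))"

definition wsupp :: "real \<Rightarrow> (real^'n) set \<Rightarrow> (real^'n) set" where
  "wsupp t A = {x\<in>A. weighting t A x \<noteq> 0}"

definition magnitude_equivalent :: "real \<Rightarrow> (real^'n) set \<Rightarrow> (real^'n) set \<Rightarrow> bool" where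
  "magnitude_equivalent t X Y \<longleftrightarrow> wsupp t X = wsupp t Y"

end

theory Submission
  imports Defs
begin

definition qf :: "('a \<Rightarrow> 'a \<Rightarrow> real) \<Rightarrow> 'a set \<Rightarrow> ('a \<Rightarrow> real) \<Rightarrow> real" where
  "qf K A c = (\<Sum>i\<in>A. \<Sum>j\<in>A. c i * c j * K i j)"

definition psd :: "('a \<Rightarrow> 'a \<Rightarrow> real) \<Rightarrow> 'a set \<Rightarrow> bool" where
  "psd K A \<longleftrightarrow> (\<forall>c. qf K A c \<ge> 0)"

definition symk :: "('a \<Rightarrow> 'a \<Rightarrow> real) \<Rightarrow> 'a set \<Rightarrow> bool" where
  "symk K A \<longleftrightarrow> (\<forall>i\<in>A. \<forall>j\<in>A. K i j = K j i)"

definition dl :: "'a \<Rightarrow> 'a \<Rightarrow> real" where "dl a i = (if i = a then 1 else 0)"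

lemma sum_dl1: "finite A \<Longrightarrow> a \<in> A \<Longrightarrow> (\<Sum>j\<in>A. dl a j * f j) = f a"
proof -
  assume "finite A" "a \<in> A"
  have "(\<Sum>j\<in>A. dl a j * f j) = (\<Sum>j\<in>A. if j = a then f j else 0)" by (intro sum.cong) (auto simp: dl_def)
  then show ?thesis using \<open>finite A\<close> \<open>a \<in> A\<close> by simp
qed
lemma sum_dl2: "finite A \<Longrightarrow> a \<in> A \<Longrightarrow> (\<Sum>j\<in>A. f j * dl a j) = f a"
  using sum_dl1[of A a f] by (simp add: mult.commute)

lemma qf_dl: assumes "finite A" "a \<in> A" shows "qf K A (dl a) = K a a"
proof -
  have "qf K A (dl a) = (\<Sum>i\<in>A. dl a i * (\<Sum>j\<in>A. dl a j * K i j))"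
    unfolding qf_def by (simp add: sum_distrib_left mult.assoc)
  also have "\<dots> = (\<Sum>i\<in>A. dl a i * K i a)" using assms by (simp add: sum_dl1)
  also have "\<dots> = K a a" using assms by (simp add: sum_dl1)
  finally show ?thesis .
qed

lemma qf_expand:
  assumes "finite A" "a \<in> A" "symk K A"
  shows "qf K A (\<lambda>i. c i + \<mu> * dl a i) = qf K A c + 2 * \<mu> * (\<Sum>i\<in>A. c i * K i a) + \<mu>^2 * K a a"
proof -
  have s: "K a i = K i a" if "i \<in> A" for i using assms that unfolding symk_def by auto
  have "qf K A (\<lambda>i. c i + \<mu> * dl a i) = (\<Sum>i\<in>A. \<Sum>j\<in>A. c i * c j * K i j + \<mu> * dl a i * (c j * K i j) + \<mu> * dl a j * (c i * K i j) + \<mu>^2 * (dl a i * dl a j * K i j))"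
    unfolding qf_def by (intro sum.cong refl) (simp add: algebra_simps power2_eq_square)
  also have "\<dots> = qf K A c + \<mu> * (\<Sum>i\<in>A. \<Sum>j\<in>A. dl a i * (c j * K i j)) + \<mu> * (\<Sum>i\<in>A. \<Sum>j\<in>A. dl a j * (c i * K i j)) + \<mu>^2 * (\<Sum>i\<in>A. \<Sum>j\<in>A. dl a i * dl a j * K i j)"
    unfolding qf_def by (simp add: sum.distrib sum_distrib_left mult.assoc)
  also have "(\<Sum>i\<in>A. \<Sum>j\<in>A. dl a i * (c j * K i j)) = (\<Sum>i\<in>A. dl a i * (\<Sum>j\<in>A. c j * K i j))"
    by (simp add: sum_distrib_left)
  also have "\<dots> = (\<Sum>j\<in>A. c j * K a j)"
    using assms by (simp add: sum_dl1)
  also have "\<dots> = (\<Sum>i\<in>A. c i * K i a)" using s by (intro sum.cong) auto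
  also have "(\<Sum>i\<in>A. \<Sum>j\<in>A. dl a j * (c i * K i j)) = (\<Sum>i\<in>A. c i * K i a)"
    using assms by (intro sum.cong refl) (simp add: sum_dl1)
  also have "(\<Sum>i\<in>A. \<Sum>j\<in>A. dl a i * dl a j * K i j) = K a a"
    using qf_dl[OF assms(1,2)] unfolding qf_def .
  finally show ?thesis by simp
qed

lemma quad_zero:
  fixes a b :: real
  assumes "\<forall>\<mu>. 0 \<le> 2*\<mu>*b + \<mu>^2*a" shows "b = 0"
proof (rule ccontr)
  assume b: "b \<noteq> 0"
  hence bb: "b*b > 0" by (metis not_real_square_gt_zero)
  show False
  proof (cases "a \<le> 0")
    case True
    have "0 \<le> 2*(-b)*b + (-b)^2*a" using assms by blast
    moreover have "(-b)^2*a \<le> 0" using True by (simp add: mult_nonneg_nonpos)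
    ultimately show False using bb by simp
  next
    case False
    have "0 \<le> 2*(-b/a)*b + (-b/a)^2*a" using assms by blast
    also have "2*(-b/a)*b + (-b/a)^2*a = - (b*b)/a" using False by (simp add: field_simps power2_eq_square)
    finally have "0 \<le> - (b*b)/a" .
    moreover have "(b*b)/a > 0" using bb False by (intro divide_pos_pos) auto
    ultimately show False by simp
  qed
qed

lemma psd_zero_row:
  assumes "finite A" "psd K A" "symk K A" "a \<in> A" "qf K A c = 0"
  shows "(\<Sum>i\<in>A. c i * K i a) = 0"
proof (rule quad_zero[where a = "K a a"], intro allI)
  fix \<mu> :: real
  have "0 \<le> qf K A (\<lambda>i. c i + \<mu> * dl a i)" using assms(2) unfolding psd_def by blast
  then show "0 \<le> 2 * \<mu> * (\<Sum>i\<in>A. c i * K i a) + \<mu>\<^sup>2 * K a a"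
    using qf_expand[OF assms(1,4,3)] assms(5) by simp
qed

lemma psd_diag: assumes "finite A" "a \<in> A" "psd K A" shows "K a a \<ge> 0"
  using qf_dl[OF assms(1,2), of K] assms(3) unfolding psd_def by metis

lemma psd_subset:
  assumes "finite B" "A \<subseteq> B" "psd K B" shows "psd K A"
  unfolding psd_def
proof
  fix c
  define c' :: "_ \<Rightarrow> real" where "c' i = (if i \<in> A then c i else 0)" for i
  have fA: "finite A" using assms(1,2) by (rule rev_finite_subset)
  have "qf K B c' = (\<Sum>i\<in>A. \<Sum>j\<in>B. c' i * c' j * K i j)"
    unfolding qf_def by (rule sum.mono_neutral_right) (use assms in \<open>auto simp: c'_def\<close>)
  also have "\<dots> = (\<Sum>i\<in>A. \<Sum>j\<in>A. c' i * c' j * K i j)"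
    by (intro sum.cong refl sum.mono_neutral_right) (use assms in \<open>auto simp: c'_def\<close>)
  also have "\<dots> = qf K A c" unfolding qf_def by (intro sum.cong refl) (auto simp: c'_def)
  finally show "0 \<le> qf K A c" using assms(3) unfolding psd_def by metis
qed

lemma psd_decomp:
  assumes "finite A" "psd K A" "symk K A"
  shows "\<exists>(m::nat) F. \<forall>i\<in>A. \<forall>j\<in>A. K i j = (\<Sum>p<m. F p i * F p j)"
  using assms
proof (induction A arbitrary: K rule: finite_induct)
  case empty
  then show ?case by auto
next
  case (insert a A)
  let ?B = "insert a A"
  have fB: "finite ?B" using insert by simp
  have Kaa: "K a a \<ge> 0" using psd_diag[OF fB _ insert(4)] by simp
  define v where "v i = (if K a a = 0 then 0 else K i a / sqrt (K a a))" for i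
  define K' where "K' i j = K i j - v i * v j" for i j
  have symB: "K i j = K j i" if "i \<in> ?B" "j \<in> ?B" for i j using insert(5) that unfolding symk_def by auto
  have "psd K' ?B" unfolding psd_def
  proof
    fix c
    define b where "b = (\<Sum>i\<in>?B. c i * K i a)"
    have qK': "qf K' ?B c = qf K ?B c - (\<Sum>i\<in>?B. c i * v i)^2"
    proof -
      have "qf K' ?B c = (\<Sum>i\<in>?B. \<Sum>j\<in>?B. c i * c j * K i j - (c i * v i) * (c j * v j))"
        unfolding qf_def K'_def by (intro sum.cong refl) (simp add: algebra_simps)
      also have "\<dots> = qf K ?B c - (\<Sum>i\<in>?B. \<Sum>j\<in>?B. (c i * v i) * (c j * v j))"
        unfolding qf_def by (simp add: sum_subtractf)
      also have "(\<Sum>i\<in>?B. \<Sum>j\<in>?B. (c i * v i) * (c j * v j)) = (\<Sum>i\<in>?B. c i * v i)^2"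
        by (simp add: power2_eq_square sum_product)
      finally show ?thesis .
    qed
    show "0 \<le> qf K' ?B c"
    proof (cases "K a a = 0")
      case True
      then show ?thesis using qK' insert(4) unfolding psd_def v_def by simp
    next
      case False
      hence pos: "K a a > 0" using Kaa by simp
      have "0 \<le> qf K ?B (\<lambda>i. c i + (- b / K a a) * dl a i)" using insert(4) unfolding psd_def by blast
      also have "\<dots> = qf K ?B c - b^2 / K a a"
        using qf_expand[OF fB insertI1 insert(5), where c=c and \<mu>="- b / K a a"] pos unfolding b_def
        by (simp add: field_simps power2_eq_square)
      also have "(\<Sum>i\<in>?B. c i * v i) = b / sqrt (K a a)"
        unfolding v_def b_def using False by (simp add: sum_divide_distrib)
      hence "(\<Sum>i\<in>?B. c i * v i)^2 = b^2 / K a a" using pos by (simp add: power_divide)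
      ultimately show ?thesis using qK' by simp
    qed
  qed
  hence p': "psd K' A" using psd_subset[OF fB] by blast
  have s': "symk K' A" using symB unfolding symk_def K'_def by auto
  obtain m :: nat and F where F: "\<forall>i\<in>A. \<forall>j\<in>A. K' i j = (\<Sum>p<m. F p i * F p j)"
    using insert(3)[OF p' s'] by blast
  have row: "K j a = v j * v a" if "j \<in> ?B" for j
  proof (cases "K a a = 0")
    case True
    have "qf K ?B (dl a) = 0" using qf_dl[OF fB, of a K] True by simp
    from psd_zero_row[OF fB insert(4) insert(5) that this]
    have "K a j = 0" using sum_dl1[OF fB insertI1, of "\<lambda>i. K i j"] by simp
    then show ?thesis using True symB that by (simp add: v_def)
  next
    case False
    then show ?thesis using Kaa unfolding v_def by (simp add: real_sqrt_mult[symmetric] power2_eq_square[symmetric])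
  qed
  define G where "G p i = (if p < m then (if i = a then 0 else F p i) else v i)" for p i
  show ?case
  proof (intro exI[of _ "Suc m"] exI[of _ G] ballI)
    fix i j assume ij: "i \<in> ?B" "j \<in> ?B"
    have e: "(\<Sum>p<Suc m. G p i * G p j) = (\<Sum>p<m. G p i * G p j) + v i * v j"
      by (simp add: G_def)
    show "K i j = (\<Sum>p<Suc m. G p i * G p j)"
    proof (cases "i = a \<or> j = a")
      case True
      then have z: "(\<Sum>p<m. G p i * G p j) = 0" by (auto simp: G_def)
      have "K i j = v i * v j"
      proof (cases "i = a")
        case True then show ?thesis using row[OF ij(2)] symB[OF ij] by (simp add: mult.commute)
      next
        case False then have "j = a" using \<open>i = a \<or> j = a\<close> by simp
        then show ?thesis using row[OF ij(1)] by simp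
      qed
      then show ?thesis using e z by simp
    next
      case False
      then have "(\<Sum>p<m. G p i * G p j) = K' i j" using F ij by (auto simp: G_def)
      then show ?thesis using e unfolding K'_def by simp
    qed
  qed
qed

lemma schur:
  assumes "psd K A" "\<forall>i\<in>A. \<forall>j\<in>A. L i j = (\<Sum>p\<in>P. F p i * F p j)"
  shows "psd (\<lambda>i j. K i j * L i j) A"
  unfolding psd_def
proof
  fix c
  have "qf (\<lambda>i j. K i j * L i j) A c = (\<Sum>p\<in>P. qf K A (\<lambda>i. c i * F p i))"
  proof -
    have "qf (\<lambda>i j. K i j * L i j) A c = (\<Sum>i\<in>A. \<Sum>j\<in>A. \<Sum>p\<in>P. (c i * F p i) * (c j * F p j) * K i j)"
      unfolding qf_def using assms(2) by (intro sum.cong refl) (simp add: sum_distrib_left sum_distrib_right algebra_simps)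
    also have "\<dots> = (\<Sum>i\<in>A. \<Sum>p\<in>P. \<Sum>j\<in>A. (c i * F p i) * (c j * F p j) * K i j)"
      by (rule sum.cong[OF refl], rule sum.swap)
    also have "\<dots> = (\<Sum>p\<in>P. \<Sum>i\<in>A. \<Sum>j\<in>A. (c i * F p i) * (c j * F p j) * K i j)"
      by (rule sum.swap)
    also have "\<dots> = (\<Sum>p\<in>P. qf K A (\<lambda>i. c i * F p i))"
      unfolding qf_def ..
    finally show ?thesis .
  qed
  also have "\<dots> \<ge> 0" using assms(1) unfolding psd_def by (simp add: sum_nonneg)
  finally show "0 \<le> qf (\<lambda>i j. K i j * L i j) A c" .
qed

lemma psd_pow:
  assumes "finite A" "psd K A" "symk K A"
  shows "psd (\<lambda>i j. K i j ^ k) A"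
proof (induction k)
  case 0
  have "qf (\<lambda>i j. K i j ^ 0) A c = (\<Sum>i\<in>A. c i)^2" for c
    unfolding qf_def by (simp add: power2_eq_square sum_product)
  then show ?case unfolding psd_def by simp
next
  case (Suc k)
  obtain m :: nat and F where F: "\<forall>i\<in>A. \<forall>j\<in>A. K i j = (\<Sum>p<m. F p i * F p j)"
    using psd_decomp[OF assms] by blast
  from schur[OF Suc F] show ?case by (simp add: mult.commute)
qed

lemma psd_exp:
  assumes "finite A" "psd K A" "symk K A"
  shows "qf (\<lambda>i j. exp (K i j)) A c \<ge> (\<Sum>i\<in>A. c i)^2 + qf K A c"
proof -
  define T where "T k = qf (\<lambda>i j. K i j ^ k) A c / fact k" for k
  have "(\<lambda>k. \<Sum>i\<in>A. \<Sum>j\<in>A. c i * c j * (K i j ^ k / fact k)) sums qf (\<lambda>i j. exp (K i j)) A c"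
    unfolding qf_def
  proof (intro sums_sum sums_mult)
    fix i j
    show "(\<lambda>n. K i j ^ n / fact n) sums exp (K i j)"
      using exp_converges[of "K i j"] by (simp add: divide_inverse mult.commute scaleR_conv_of_real)
  qed
  hence s: "T sums qf (\<lambda>i j. exp (K i j)) A c"
    unfolding T_def qf_def by (simp add: sum_divide_distrib)
  have nn: "T k \<ge> 0" for k unfolding T_def using psd_pow[OF assms, of k] unfolding psd_def by simp
  have "(\<Sum>k<2. T k) \<le> qf (\<lambda>i j. exp (K i j)) A c"
    using sum_le_suminf[OF sums_summable[OF s], of "{..<2}"] nn sums_unique[OF s] by simp
  moreover have "(\<Sum>k<2. T k) = (\<Sum>i\<in>A. c i)^2 + qf K A c"
    unfolding T_def qf_def by (simp add: numeral_2_eq_2 power2_eq_square sum_product)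
  ultimately show ?thesis by simp
qed

definition spd :: "('a \<Rightarrow> 'a \<Rightarrow> real) \<Rightarrow> 'a set \<Rightarrow> bool" where
  "spd K A \<longleftrightarrow> (\<forall>c. (\<exists>x\<in>A. c x \<noteq> 0) \<longrightarrow> qf K A c > 0)"

lemma qf_zero_outside:
  assumes "finite B" "A \<subseteq> B" "\<forall>x\<in>B-A. c x = 0"
  shows "qf K B c = qf K A c"
proof -
  have "qf K B c = (\<Sum>i\<in>A. \<Sum>j\<in>B. c i * c j * K i j)"
    unfolding qf_def by (rule sum.mono_neutral_right) (use assms in auto)
  also have "\<dots> = (\<Sum>i\<in>A. \<Sum>j\<in>A. c i * c j * K i j)"
    by (intro sum.cong refl sum.mono_neutral_right) (use assms in auto)
  finally show ?thesis unfolding qf_def .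
qed

lemma spd_subset:
  assumes "finite B" "A \<subseteq> B" "spd K B" shows "spd K A"
  unfolding spd_def
proof (intro allI impI)
  fix c :: "_ \<Rightarrow> real" assume "\<exists>x\<in>A. c x \<noteq> 0"
  define c' :: "_ \<Rightarrow> real" where "c' i = (if i \<in> A then c i else 0)" for i
  have "qf K B c' = qf K A c'" by (rule qf_zero_outside) (use assms in \<open>auto simp: c'_def\<close>)
  also have "\<dots> = qf K A c" unfolding qf_def by (intro sum.cong refl) (auto simp: c'_def)
  finally have "qf K B c' = qf K A c" .
  moreover have "qf K B c' > 0" using assms(3) \<open>\<exists>x\<in>A. c x \<noteq> 0\<close> assms(2) unfolding spd_def
    by (metis c'_def subsetD)
  ultimately show "qf K A c > 0" by simp
qed

lemma solve_exists:
  assumes "finite A" "symk K A" "spd K A"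
  shows "\<exists>w. (\<forall>x\<in>A. (\<Sum>y\<in>A. K x y * w y) = b x) \<and> (\<forall>x. x \<notin> A \<longrightarrow> w x = 0)"
  using assms
proof (induction A arbitrary: b rule: finite_induct)
  case empty
  then show ?case by (intro exI[of _ "\<lambda>_. 0"]) auto
next
  case (insert a A)
  let ?B = "insert a A"
  have fB: "finite ?B" using insert by simp
  have sA: "symk K A" using insert(4) unfolding symk_def by auto
  have pA: "spd K A" using spd_subset[OF fB _ insert(5)] by blast
  obtain u where u: "\<forall>x\<in>A. (\<Sum>y\<in>A. K x y * u y) = b x" "\<forall>x. x \<notin> A \<longrightarrow> u x = 0"
    using insert(3)[OF sA pA] by blast
  obtain v where v: "\<forall>x\<in>A. (\<Sum>y\<in>A. K x y * v y) = K x a" "\<forall>x. x \<notin> A \<longrightarrow> v x = 0"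
    using insert(3)[OF sA pA, of "\<lambda>x. K x a"] by blast
  have symB: "K i j = K j i" if "i \<in> ?B" "j \<in> ?B" for i j using insert(4) that unfolding symk_def by auto
  define D where "D = K a a - (\<Sum>y\<in>A. K a y * v y)"
  have "D > 0"
  proof -
    define c where "c i = - v i + 1 * dl a i" for i
    have "qf K ?B c = qf K ?B (\<lambda>i. - v i) + 2 * 1 * (\<Sum>i\<in>?B. - v i * K i a) + 1^2 * K a a"
      unfolding c_def by (rule qf_expand[OF fB insertI1 insert(4)])
    also have "qf K ?B (\<lambda>i. - v i) = qf K A (\<lambda>i. - v i)"
      by (rule qf_zero_outside) (use fB v insert(2) in auto)
    also have "\<dots> = (\<Sum>i\<in>A. v i * (\<Sum>j\<in>A. K i j * v j))"
      unfolding qf_def by (simp add: sum_distrib_left algebra_simps)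
    also have "\<dots> = (\<Sum>i\<in>A. v i * K i a)" using v(1) by simp
    also have "(\<Sum>i\<in>?B. - v i * K i a) = - (\<Sum>i\<in>A. v i * K i a)"
      using insert(1,2) v(2) by (simp add: sum_negf)
    also have "(\<Sum>i\<in>A. v i * K i a) = (\<Sum>y\<in>A. K a y * v y)"
      using symB by (intro sum.cong refl) (simp add: mult.commute)
    finally have "qf K ?B c = D" unfolding D_def by simp
    moreover have "c a \<noteq> 0" unfolding c_def dl_def using v(2) insert(2) by simp
    ultimately show ?thesis using insert(5) unfolding spd_def by (metis insertI1)
  qed
  define \<alpha> where "\<alpha> = (b a - (\<Sum>y\<in>A. K a y * u y)) / D"
  define w where "w x = (if x = a then \<alpha> else u x - \<alpha> * v x)" for x
  have wA: "(\<Sum>y\<in>A. K x y * w y) = (\<Sum>y\<in>A. K x y * u y) - \<alpha> * (\<Sum>y\<in>A. K x y * v y)" for x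
  proof -
    have "(\<Sum>y\<in>A. K x y * w y) = (\<Sum>y\<in>A. K x y * u y - \<alpha> * (K x y * v y))"
      using insert(2) by (intro sum.cong refl) (auto simp: w_def algebra_simps)
    then show ?thesis by (simp add: sum_subtractf sum_distrib_left)
  qed
  have wB: "(\<Sum>y\<in>?B. K x y * w y) = K x a * \<alpha> + (\<Sum>y\<in>A. K x y * w y)" for x
    using insert(1,2) by (simp add: w_def)
  show ?case
  proof (intro exI[of _ w] conjI allI impI ballI)
    fix x assume "x \<in> ?B"
    show "(\<Sum>y\<in>?B. K x y * w y) = b x"
    proof (cases "x = a")
      case True
      have "(\<Sum>y\<in>?B. K x y * w y) = K a a * \<alpha> + (\<Sum>y\<in>A. K a y * u y) - \<alpha> * (\<Sum>y\<in>A. K a y * v y)"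
        using wB wA True by simp
      also have "\<dots> = \<alpha> * D + (\<Sum>y\<in>A. K a y * u y)" unfolding D_def by (simp add: algebra_simps)
      also have "\<dots> = b a" unfolding \<alpha>_def using \<open>D > 0\<close> by simp
      finally show ?thesis using True by simp
    next
      case False
      hence xA: "x \<in> A" using \<open>x \<in> ?B\<close> by simp
      show ?thesis using wB wA u(1) v(1) xA by (simp add: mult.commute)
    qed
  next
    fix x assume "x \<notin> ?B"
    then show "w x = 0" using u(2) v(2) by (simp add: w_def)
  qed
qed

lemma solve_unique:
  assumes "finite A" "spd K A"
    and w1: "\<forall>x\<in>A. (\<Sum>y\<in>A. K x y * w1 y) = b x" "\<forall>x. x \<notin> A \<longrightarrow> w1 x = 0"
    and w2: "\<forall>x\<in>A. (\<Sum>y\<in>A. K x y * w2 y) = b x" "\<forall>x. x \<notin> A \<longrightarrow> w2 x = 0"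
  shows "w1 = w2"
proof -
  define c where "c x = w1 x - w2 x" for x
  have z: "(\<Sum>y\<in>A. K x y * c y) = 0" if "x \<in> A" for x
    using w1(1) w2(1) that unfolding c_def by (simp add: right_diff_distrib sum_subtractf)
  have "qf K A c = (\<Sum>x\<in>A. c x * (\<Sum>y\<in>A. K x y * c y))"
    unfolding qf_def by (simp add: sum_distrib_left algebra_simps)
  also have "\<dots> = 0" using z by simp
  finally have "\<not> (\<exists>x\<in>A. c x \<noteq> 0)" using assms(2) unfolding spd_def by (metis less_irrefl)
  then show ?thesis using w1(2) w2(2) unfolding c_def by (metis eq_iff_diff_eq_0 ext)
qed

definition phi :: "real \<Rightarrow> real \<Rightarrow> real" where
  "phi r s = (if s > 0 then (1 - exp (- (s * r^2))) * s powr (-3/2) else 0)"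

definition gb :: "real \<Rightarrow> real" where
  "gb s = (if s \<in> {0..1} then s powr (-1/2) else 0) + (if s \<in> {1..} then s powr (-3/2) else 0)"

lemma phi_meas[measurable]: "phi r \<in> borel_measurable borel"
  unfolding phi_def by measurable

lemma gb_meas[measurable]: "gb \<in> borel_measurable borel"
  unfolding gb_def by measurable

lemma gb_nonneg: "gb s \<ge> 0"
  unfolding gb_def by auto

lemma phi_nonneg: "phi r s \<ge> 0"
  unfolding phi_def by auto

lemma phi1_bound: "norm (phi 1 s) \<le> norm (gb s)"
proof -
  have "phi 1 s \<le> gb s"
  proof (cases "s > 0")
    case False
    then show ?thesis unfolding phi_def using gb_nonneg by simp
  next
    case True
    have e1: "1 - exp (- s) \<le> 1" by simp
    have e2: "1 - exp (- s) \<le> s" using exp_ge_add_one_self[of "-s"] by simp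
    have e0: "0 \<le> 1 - exp (- s)" using True by simp
    show ?thesis
    proof (cases "s \<le> 1")
      case True
      have "phi 1 s = (1 - exp (- s)) * s powr (-3/2)" using \<open>s > 0\<close> by (simp add: phi_def)
      also have "\<dots> \<le> s * s powr (-3/2)" using e2 by (intro mult_right_mono) auto
      also have "s * s powr (-3/2) = s powr (-1/2)"
        using \<open>s > 0\<close> by (simp add: powr_mult_base)
      also have "\<dots> \<le> gb s" unfolding gb_def using True \<open>s > 0\<close> by auto
      finally show ?thesis .
    next
      case False
      have "phi 1 s = (1 - exp (- s)) * s powr (-3/2)" using \<open>s > 0\<close> by (simp add: phi_def)
      also have "\<dots> \<le> 1 * s powr (-3/2)" using e1 by (intro mult_right_mono) auto
      also have "\<dots> \<le> gb s" unfolding gb_def using False by auto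
      finally show ?thesis .
    qed
  qed
  then show ?thesis using phi_nonneg gb_nonneg by simp
qed

lemma gb_int: "integrable lborel gb"
proof -
  have h1: "((\<lambda>s. s powr (-1/2)) has_integral 2) {0..1::real}"
    using has_integral_powr_from_0[of "-1/2" 1] by simp
  have h2: "((\<lambda>s. s powr (-3/2)) has_integral 2) {1::real..}"
    using has_integral_powr_to_inf[of "-3/2" 1] by simp
  have u1: "((\<lambda>x. if x \<in> {0..1::real} then x powr (-1/2) else 0) has_integral 2) UNIV"
    unfolding has_integral_restrict_UNIV using h1 by simp
  have u2: "((\<lambda>x. if x \<in> {1::real..} then x powr (-3/2) else 0) has_integral 2) UNIV"
    unfolding has_integral_restrict_UNIV using h2 by simp
  have "(gb has_integral (2 + 2)) UNIV"
    unfolding gb_def by (intro has_integral_add u1 u2)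
  then have "integral\<^sup>N lborel gb = 4"
    using nn_integral_has_integral_lborel[OF gb_meas gb_nonneg] by simp
  then show ?thesis
    unfolding integrable_iff_bounded using gb_nonneg by (simp add: ennreal_less_top)
qed

lemma phi1_int: "integrable lborel (phi 1)"
proof -
  have "phi 1 \<in> borel_measurable lborel" by measurable
  then show ?thesis by (rule Bochner_Integration.integrable_bound[OF gb_int]) (use phi1_bound in \<open>auto intro!: AE_I2\<close>)
qed

lemma phi_scale: assumes "r > 0" shows "phi r s = r^3 * phi 1 (r^2 * s)"
proof (cases "s > 0")
  case False
  then have "\<not> r^2 * s > 0" using assms by (simp add: zero_less_mult_iff)
  then show ?thesis using False by (simp add: phi_def)
next
  case True
  have "(r^2 * s) powr (-3/2) = (r^2) powr (-3/2) * s powr (-3/2)"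
    using True assms by (simp add: powr_mult)
  also have "(r^2) powr (-3/2) = 1 / r^3"
  proof -
    have "(r^2) powr (-3/2) = (r powr 2) powr (-3/2)" using assms by (simp add: powr_numeral)
    also have "\<dots> = r powr (2 * (-3/2))" by (simp add: powr_powr)
    also have "\<dots> = 1 / r powr 3" by (simp add: powr_minus_divide)
    also have "\<dots> = 1 / r^3" using assms by (simp add: powr_numeral)
    finally show ?thesis .
  qed
  finally have p: "(r^2 * s) powr (-3/2) = 1 / r^3 * s powr (-3/2)" .
  have "r^2 * s > 0" using True assms by simp
  then have "phi 1 (r^2 * s) = (1 - exp (- (s * r^2))) * (1 / r^3 * s powr (-3/2))"
    using p by (simp add: phi_def mult.commute)
  then show ?thesis using True assms by (simp add: phi_def)
qed

definition I1 :: real where "I1 = integral\<^sup>L lborel (phi 1)"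

lemma phi_hasint: assumes "r \<ge> 0" shows "has_bochner_integral lborel (phi r) (r * I1)"
proof (cases "r = 0")
  case True
  then have "phi r = (\<lambda>_. 0)" by (auto simp: phi_def)
  then show ?thesis using True by (simp add: has_bochner_integral_zero)
next
  case False
  then have r: "r > 0" using assms by simp
  have c: "r^2 \<noteq> 0" using r by simp
  have int: "integrable lborel (\<lambda>x. phi 1 (0 + r^2 * x))"
    by (rule lborel_integrable_real_affine[OF phi1_int c])
  have eq: "I1 = \<bar>r^2\<bar> * (\<integral>x. phi 1 (0 + r^2 * x) \<partial>lborel)"
    unfolding I1_def using lborel_integral_real_affine[OF c, of "phi 1" 0] by simp
  have fe: "phi r = (\<lambda>x. r^3 * phi 1 (0 + r^2 * x))" using phi_scale[OF r] by auto
  have "integrable lborel (phi r)" unfolding fe using int by simp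
  moreover have "integral\<^sup>L lborel (phi r) = r * I1"
    unfolding fe eq using r by (simp add: power2_eq_square power3_eq_cube)
  ultimately show ?thesis by (simp add: has_bochner_integral_iff)
qed

lemma I1_pos: "I1 > 0"
proof -
  define m where "m = (1 - exp (-1)) * 2 powr (-3/2::real)"
  have mpos: "m > 0" unfolding m_def by simp
  have "(\<lambda>s. m * indicator {1..2::real} s) s \<le> phi 1 s" for s
  proof (cases "s \<in> {1..2}")
    case True
    have a: "1 - exp (-1) \<le> 1 - exp (- s)" using True by simp
    have b: "2 powr (-3/2) \<le> s powr (-3/2::real)" using True by (intro powr_mono2') auto
    have "m \<le> (1 - exp (- s)) * s powr (-3/2)" unfolding m_def
      using a b by (intro mult_mono) auto
    then show ?thesis using True by (simp add: phi_def)
  next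
    case False
    then show ?thesis using phi_nonneg[of 1 s] by simp
  qed
  then have "integral\<^sup>L lborel (\<lambda>s. m * indicator {1..2::real} s) \<le> I1"
    unfolding I1_def by (intro integral_mono phi1_int) auto
  moreover have "integral\<^sup>L lborel (\<lambda>s. m * indicator {1..2::real} s) = m" by simp
  ultimately show ?thesis using mpos by simp
qed

lemma gauss_psd:
  fixes A :: "'a::real_inner set"
  assumes "finite A" "s \<ge> 0"
  shows "psd (\<lambda>x y. exp (- (s * (norm (x - y))^2))) A"
  unfolding psd_def
proof
  fix c :: "'a \<Rightarrow> real"
  define K0 where "K0 x y = 2 * s * (x \<bullet> y)" for x y :: 'a
  have q0: "qf K0 A d = 2 * s * (norm (\<Sum>x\<in>A. d x *\<^sub>R x))^2" for d
  proof -
    have "(norm (\<Sum>x\<in>A. d x *\<^sub>R x))^2 = (\<Sum>x\<in>A. d x *\<^sub>R x) \<bullet> (\<Sum>y\<in>A. d y *\<^sub>R y)"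
      by (simp add: power2_norm_eq_inner)
    also have "\<dots> = (\<Sum>x\<in>A. \<Sum>y\<in>A. (d x *\<^sub>R x) \<bullet> (d y *\<^sub>R y))"
      by (rule trans[OF inner_sum_left], rule sum.cong[OF refl], rule inner_sum_right)
    also have "\<dots> = (\<Sum>x\<in>A. \<Sum>y\<in>A. d x * d y * (x \<bullet> y))"
      by (simp add: mult.assoc mult.left_commute)
    finally show ?thesis unfolding qf_def K0_def by (simp add: sum_distrib_left algebra_simps)
  qed
  have p0: "psd K0 A" unfolding psd_def using q0 assms(2) by simp
  have s0: "symk K0 A" unfolding symk_def K0_def by (simp add: inner_commute)
  define a where "a x = c x * exp (- (s * (norm x)^2))" for x
  have pt: "exp (- (s * (norm (x - y))^2)) = exp (- (s * (norm x)^2)) * exp (- (s * (norm y)^2)) * exp (K0 x y)" for x y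
  proof -
    have "(norm (x - y))^2 = (norm x)^2 + (norm y)^2 - 2 * (x \<bullet> y)"
      by (simp add: power2_norm_eq_inner inner_diff inner_commute)
    then have "- (s * (norm (x - y))^2) = - (s * ((norm x)^2 + (norm y)^2 - 2 * (x \<bullet> y)))"
      by (simp only:)
    also have "\<dots> = - (s * (norm x)^2) + - (s * (norm y)^2) + K0 x y"
      unfolding K0_def by (simp add: algebra_simps)
    finally have "- (s * (norm (x - y))^2) = - (s * (norm x)^2) + - (s * (norm y)^2) + K0 x y" .
    then show ?thesis by (simp only: exp_add)
  qed
  have "qf (\<lambda>x y. exp (- (s * (norm (x - y))^2))) A c = qf (\<lambda>x y. exp (K0 x y)) A a"
    unfolding qf_def a_def pt by (intro sum.cong refl) (simp add: algebra_simps)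
  also have "\<dots> \<ge> (\<Sum>i\<in>A. a i)^2 + qf K0 A a" by (rule psd_exp[OF assms(1) p0 s0])
  finally show "0 \<le> qf (\<lambda>x y. exp (- (s * (norm (x - y))^2))) A c"
    using p0 unfolding psd_def by (smt (verit) zero_le_power2)
qed

lemma cnd_norm:
  fixes A :: "'a::real_inner set"
  assumes "finite A" "(\<Sum>x\<in>A. c x) = 0"
  shows "qf (\<lambda>x y. norm (x - y)) A c \<le> 0"
proof -
  define F where "F s = (\<Sum>x\<in>A. \<Sum>y\<in>A. c x * c y * phi (norm (x - y)) s)" for s
  have hb: "has_bochner_integral lborel F (\<Sum>x\<in>A. \<Sum>y\<in>A. c x * c y * (norm (x - y) * I1))"
    unfolding F_def by (intro has_bochner_integral_sum has_bochner_integral_mult_right phi_hasint) auto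
  have Fle: "F s \<le> 0" for s
  proof (cases "s > 0")
    case False
    then show ?thesis unfolding F_def phi_def by simp
  next
    case True
    have "F s = s powr (-3/2) * (\<Sum>x\<in>A. \<Sum>y\<in>A. c x * c y * (1 - exp (- (s * (norm (x - y))^2))))"
      unfolding F_def phi_def using True by (simp add: sum_distrib_left algebra_simps)
    also have "(\<Sum>x\<in>A. \<Sum>y\<in>A. c x * c y * (1 - exp (- (s * (norm (x - y))^2))))
       = (\<Sum>x\<in>A. c x)^2 - qf (\<lambda>x y. exp (- (s * (norm (x - y))^2))) A c"
      unfolding qf_def by (simp add: power2_eq_square sum_product right_diff_distrib sum_subtractf)
    also have "\<dots> \<le> 0" using gauss_psd[OF assms(1), of s] True assms(2) unfolding psd_def by simp
    finally show ?thesis using True by (simp add: mult_nonneg_nonpos)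
  qed
  have "0 \<le> integral\<^sup>L lborel (\<lambda>s. - F s)" by (rule Bochner_Integration.integral_nonneg) (use Fle in auto)
  also have "integral\<^sup>L lborel (\<lambda>s. - F s) = - (\<Sum>x\<in>A. \<Sum>y\<in>A. c x * c y * (norm (x - y) * I1))"
    using hb by (simp add: has_bochner_integral_iff)
  also have "(\<Sum>x\<in>A. \<Sum>y\<in>A. c x * c y * (norm (x - y) * I1)) = I1 * qf (\<lambda>x y. norm (x - y)) A c"
    unfolding qf_def by (simp add: sum_distrib_left algebra_simps)
  finally show ?thesis using I1_pos by (simp add: mult_le_0_iff)
qed

definition gk :: "'a::real_normed_vector \<Rightarrow> 'a \<Rightarrow> real" where
  "gk x y = norm x + norm y - norm (x - y)"

lemma qf_gk:
  "qf gk A c = 2 * (\<Sum>x\<in>A. c x) * (\<Sum>x\<in>A. c x * norm x) - qf (\<lambda>x y. norm (x - y)) A c"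
proof -
  have "qf gk A c = (\<Sum>x\<in>A. \<Sum>y\<in>A. (c x * norm x) * c y + c x * (c y * norm y) - c x * c y * norm (x - y))"
    unfolding qf_def gk_def by (intro sum.cong refl) (simp add: algebra_simps)
  also have "\<dots> = (\<Sum>x\<in>A. \<Sum>y\<in>A. (c x * norm x) * c y) + (\<Sum>x\<in>A. \<Sum>y\<in>A. c x * (c y * norm y)) - qf (\<lambda>x y. norm (x - y)) A c"
    unfolding qf_def by (simp add: sum.distrib sum_subtractf)
  also have "(\<Sum>x\<in>A. \<Sum>y\<in>A. (c x * norm x) * c y) = (\<Sum>x\<in>A. c x * norm x) * (\<Sum>x\<in>A. c x)"
    by (simp add: sum_product)
  also have "(\<Sum>x\<in>A. \<Sum>y\<in>A. c x * (c y * norm y)) = (\<Sum>x\<in>A. c x) * (\<Sum>x\<in>A. c x * norm x)"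
    by (simp add: sum_product)
  finally show ?thesis by simp
qed

lemma gk_sym: "symk gk A"
  unfolding symk_def gk_def by (simp add: norm_minus_commute add.commute)

lemma d_sym: "symk (\<lambda>x y. norm (x - y)) A"
  unfolding symk_def by (simp add: norm_minus_commute)

lemma gk_psd:
  fixes B :: "'a::real_inner set"
  assumes "finite B" shows "psd gk B"
  unfolding psd_def
proof
  fix c :: "'a \<Rightarrow> real"
  let ?B = "insert 0 B"
  let ?d = "\<lambda>x y. norm (x - y)"
  define c' where "c' x = (if x \<in> B then c x else 0)" for x
  define \<mu> where "\<mu> = - (\<Sum>x\<in>B. c x)"
  have fB: "finite ?B" using assms by simp
  have s1: "(\<Sum>x\<in>?B. c' x) = (\<Sum>x\<in>B. c x)"
  proof -
    have "(\<Sum>x\<in>?B. c' x) = (\<Sum>x\<in>B. c' x)" by (rule sum.mono_neutral_right) (use assms in \<open>auto simp: c'_def\<close>)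
    then show ?thesis by (simp add: c'_def)
  qed
  have s2: "(\<Sum>x\<in>?B. c' x * norm (x - 0)) = (\<Sum>x\<in>B. c x * norm x)"
  proof -
    have "(\<Sum>x\<in>?B. c' x * norm (x - 0)) = (\<Sum>x\<in>B. c' x * norm (x - 0))"
      by (rule sum.mono_neutral_right) (use assms in \<open>auto simp: c'_def\<close>)
    then show ?thesis by (simp add: c'_def)
  qed
  have q1: "qf ?d ?B c' = qf ?d B c"
  proof -
    have "qf ?d ?B c' = qf ?d B c'" by (rule qf_zero_outside) (use assms in \<open>auto simp: c'_def\<close>)
    also have "\<dots> = qf ?d B c" unfolding qf_def by (intro sum.cong refl) (auto simp: c'_def)
    finally show ?thesis .
  qed
  have "(\<Sum>x\<in>?B. c' x + \<mu> * dl 0 x) = 0"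
  proof -
    have "(\<Sum>x\<in>?B. c' x + \<mu> * dl 0 x) = (\<Sum>x\<in>?B. c' x) + \<mu> * (\<Sum>x\<in>?B. dl 0 x * 1)"
      by (simp add: sum.distrib sum_distrib_left)
    also have "(\<Sum>x\<in>?B. dl 0 x * 1) = 1" by (rule sum_dl1[OF fB insertI1])
    finally show ?thesis using s1 unfolding \<mu>_def by simp
  qed
  then have "qf ?d ?B (\<lambda>x. c' x + \<mu> * dl 0 x) \<le> 0" by (rule cnd_norm[OF fB])
  also have "qf ?d ?B (\<lambda>x. c' x + \<mu> * dl 0 x) = qf ?d ?B c' + 2 * \<mu> * (\<Sum>x\<in>?B. c' x * norm (x - 0)) + \<mu>^2 * norm (0 - 0::'a)"
    by (rule qf_expand[OF fB insertI1 d_sym])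
  finally have "qf ?d B c - 2 * (\<Sum>x\<in>B. c x) * (\<Sum>x\<in>B. c x * norm x) \<le> 0"
    unfolding q1 s2 \<mu>_def by simp
  then show "0 \<le> qf gk B c" unfolding qf_gk by simp
qed

lemma second_diff:
  fixes p u :: "'a::real_inner"
  assumes "p \<noteq> 0" "norm u = 1" "e \<ge> 0"
  shows "0 \<le> norm (p - e *\<^sub>R u) + norm (p + e *\<^sub>R u) - 2 * norm p"
    and "norm (p - e *\<^sub>R u) + norm (p + e *\<^sub>R u) - 2 * norm p \<le> e^2 / norm p"
proof -
  have "norm ((p - e *\<^sub>R u) + (p + e *\<^sub>R u)) \<le> norm (p - e *\<^sub>R u) + norm (p + e *\<^sub>R u)"
    by (rule norm_triangle_ineq)
  moreover have "(p - e *\<^sub>R u) + (p + e *\<^sub>R u) = 2 *\<^sub>R p" by (simp add: scaleR_2)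
  ultimately show "0 \<le> norm (p - e *\<^sub>R u) + norm (p + e *\<^sub>R u) - 2 * norm p" by simp
next
  define a where "a = norm (p - e *\<^sub>R u)"
  define b where "b = norm (p + e *\<^sub>R u)"
  define P where "P = norm p"
  have P: "P > 0" using assms unfolding P_def by simp
  have uu: "u \<bullet> u = 1" using assms(2) by (simp add: norm_eq_1)
  have par: "a^2 + b^2 = 2 * P^2 + 2 * e^2"
    unfolding a_def b_def P_def power2_norm_eq_inner
    by (simp add: inner_diff inner_add uu inner_commute algebra_simps power2_eq_square)
  have "(a + b)^2 \<le> 2 * (a^2 + b^2)"
    by (smt (verit) sum_squares_bound zero_le_power2 power2_sum power2_diff)
  also have "\<dots> \<le> (2 * P + e^2 / P)^2"
  proof -
    have "(2 * P + e^2 / P)^2 = 4 * P^2 + 4 * e^2 + (e^2/P)^2"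
      using P by (simp add: power2_eq_square field_simps)
    then show ?thesis using par by simp
  qed
  finally have "a + b \<le> 2 * P + e^2 / P"
    by (rule power2_le_imp_le) (use P in simp)
  then show "a + b - 2 * P \<le> e^2 / P" by simp
qed

lemma strict_cnd:
  fixes A :: "'a::euclidean_space set"
  assumes "finite A" "(\<Sum>x\<in>A. c x) = 0" "x0 \<in> A" "c x0 \<noteq> 0"
  shows "qf (\<lambda>x y. norm (x - y)) A c < 0"
proof (rule ccontr)
  let ?d = "\<lambda>x y::'a. norm (x - y)"
  assume "\<not> qf ?d A c < 0"
  with cnd_norm[OF assms(1,2)] have q0: "qf ?d A c = 0" by simp
  have const: "(\<Sum>x\<in>A. c x * norm (x - y)) = (\<Sum>x\<in>A. c x * norm x)" for y
  proof -
    let ?B = "insert y A"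
    define c' where "c' x = (if x \<in> A then c x else 0)" for x
    have fB: "finite ?B" using assms(1) by simp
    have "qf gk ?B c' = qf gk A c'" by (rule qf_zero_outside) (use fB in \<open>auto simp: c'_def\<close>)
    also have "\<dots> = qf gk A c" unfolding qf_def by (intro sum.cong refl) (auto simp: c'_def)
    also have "\<dots> = 0" using qf_gk[of A c] q0 assms(2) by simp
    finally have "qf gk ?B c' = 0" .
    from psd_zero_row[OF fB gk_psd[OF fB] gk_sym insertI1 this]
    have "(\<Sum>x\<in>?B. c' x * gk x y) = 0" .
    moreover have "(\<Sum>x\<in>?B. c' x * gk x y) = (\<Sum>x\<in>A. c' x * gk x y)"
      by (rule sum.mono_neutral_right) (use fB in \<open>auto simp: c'_def\<close>)
    moreover have "(\<Sum>x\<in>A. c' x * gk x y) = (\<Sum>x\<in>A. c x * gk x y)"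
      by (intro sum.cong refl) (auto simp: c'_def)
    moreover have "(\<Sum>x\<in>A. c x * gk x y) = (\<Sum>x\<in>A. c x * norm x) + norm y * (\<Sum>x\<in>A. c x) - (\<Sum>x\<in>A. c x * norm (x - y))"
      unfolding gk_def by (simp add: algebra_simps sum.distrib sum_subtractf sum_distrib_left)
    ultimately show ?thesis using assms(2) by simp
  qed
  obtain u :: 'a where u: "u \<in> Basis" using nonempty_Basis by blast
  then have nu: "norm u = 1" by simp
  define M where "M = (\<Sum>x\<in>A-{x0}. \<bar>c x\<bar> / norm (x - x0))"
  have M0: "M \<ge> 0" unfolding M_def by (intro sum_nonneg) auto
  define e where "e = \<bar>c x0\<bar> / (M + 1)"
  have cpos: "\<bar>c x0\<bar> > 0" using assms(4) by simp
  have epos: "e > 0" unfolding e_def using cpos M0 by simp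
  define \<delta> where "\<delta> x = norm ((x - x0) - e *\<^sub>R u) + norm ((x - x0) + e *\<^sub>R u) - 2 * norm (x - x0)" for x
  have key: "(\<Sum>x\<in>A. c x * \<delta> x) = 0"
  proof -
    have n1: "x - (x0 + e *\<^sub>R u) = (x - x0) - e *\<^sub>R u" for x by (simp add: algebra_simps)
    have n2: "x - (x0 - e *\<^sub>R u) = (x - x0) + e *\<^sub>R u" for x by (simp add: algebra_simps)
    have "(\<Sum>x\<in>A. c x * \<delta> x) = (\<Sum>x\<in>A. c x * norm (x - (x0 + e *\<^sub>R u))) + (\<Sum>x\<in>A. c x * norm (x - (x0 - e *\<^sub>R u))) - 2 * (\<Sum>x\<in>A. c x * norm (x - x0))"
      unfolding \<delta>_def n1 n2 by (simp add: algebra_simps sum.distrib sum_subtractf sum_distrib_left)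
    then show ?thesis unfolding const by simp
  qed
  have dx0: "\<delta> x0 = 2 * e" unfolding \<delta>_def using nu epos by simp
  have "(\<Sum>x\<in>A. c x * \<delta> x) = c x0 * \<delta> x0 + (\<Sum>x\<in>A-{x0}. c x * \<delta> x)"
    by (rule sum.remove[OF assms(1,3)])
  then have eq: "c x0 * (2 * e) = - (\<Sum>x\<in>A-{x0}. c x * \<delta> x)" using key dx0 by simp
  have bnd: "\<bar>c x * \<delta> x\<bar> \<le> \<bar>c x\<bar> / norm (x - x0) * e^2" if "x \<in> A - {x0}" for x
  proof -
    have p: "x - x0 \<noteq> 0" using that by simp
    have "0 \<le> \<delta> x" "\<delta> x \<le> e^2 / norm (x - x0)"
      unfolding \<delta>_def using second_diff[OF p nu, of e] epos by auto
    then have "\<bar>c x\<bar> * \<delta> x \<le> \<bar>c x\<bar> * (e^2 / norm (x - x0))"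
      by (intro mult_left_mono) auto
    then have "\<bar>c x * \<delta> x\<bar> \<le> \<bar>c x\<bar> * (e^2 / norm (x - x0))"
      using \<open>0 \<le> \<delta> x\<close> by (simp add: abs_mult)
    then show ?thesis by simp
  qed
  have "\<bar>c x0\<bar> * (2 * e) = \<bar>\<Sum>x\<in>A-{x0}. c x * \<delta> x\<bar>"
    using arg_cong[OF eq, of abs] epos by (simp add: abs_mult)
  also have "\<dots> \<le> (\<Sum>x\<in>A-{x0}. \<bar>c x * \<delta> x\<bar>)" by (rule sum_abs)
  also have "\<dots> \<le> (\<Sum>x\<in>A-{x0}. \<bar>c x\<bar> / norm (x - x0) * e^2)" by (rule sum_mono) (rule bnd)
  also have "\<dots> = M * e^2" unfolding M_def by (simp add: sum_distrib_right)
  finally have "\<bar>c x0\<bar> * (2 * e) \<le> M * e^2" .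
  then have "2 * \<bar>c x0\<bar> \<le> M * e" using epos by (simp add: power2_eq_square)
  moreover have "M * e < \<bar>c x0\<bar>"
  proof -
    have "M * e = \<bar>c x0\<bar> * (M / (M + 1))" unfolding e_def using M0 by simp
    also have "\<dots> < \<bar>c x0\<bar> * 1" using cpos M0 by (intro mult_strict_left_mono) auto
    finally show ?thesis by simp
  qed
  ultimately show False using cpos by simp
qed

lemma zeta_spd: "t > 0 \<Longrightarrow> finite (A :: (real^'n) set) \<Longrightarrow> spd (zeta t) A"
  unfolding spd_def
proof (intro allI impI)
  fix c :: "real^'n \<Rightarrow> real"
  assume t: "t > 0" and fA: "finite A" and "\<exists>x\<in>A. c x \<noteq> 0"
  then obtain x0 where x0: "x0 \<in> A" "c x0 \<noteq> 0" by blast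
  define a where "a x = c x * exp (- t * norm x)" for x
  define K where "K x y = t * gk x y" for x y :: "real^'n"
  have qK: "qf K A d = t * qf gk A d" for d
    unfolding qf_def K_def by (simp add: sum_distrib_left algebra_simps)
  have pK: "psd K A" unfolding psd_def qK using gk_psd[OF fA] t unfolding psd_def by simp
  have sK: "symk K A" using gk_sym unfolding symk_def K_def by metis
  have pt: "zeta t x y = exp (- t * norm x) * exp (- t * norm y) * exp (K x y)" for x y
  proof -
    have "- t * norm (x - y) = - t * norm x + - t * norm y + K x y"
      unfolding K_def gk_def by (simp add: algebra_simps)
    then show ?thesis unfolding zeta_def by (simp only: exp_add)
  qed
  have "qf (zeta t) A c = qf (\<lambda>x y. exp (K x y)) A a"
    unfolding qf_def a_def pt by (intro sum.cong refl) (simp add: algebra_simps)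
  also have "\<dots> \<ge> (\<Sum>i\<in>A. a i)^2 + qf K A a" by (rule psd_exp[OF fA pK sK])
  finally have ge: "qf (zeta t) A c \<ge> (\<Sum>i\<in>A. a i)^2 + t * qf gk A a" unfolding qK .
  have g0: "qf gk A a \<ge> 0" using gk_psd[OF fA] unfolding psd_def by simp
  show "qf (zeta t) A c > 0"
  proof (cases "(\<Sum>i\<in>A. a i) = 0")
    case False
    then have "(\<Sum>i\<in>A. a i)^2 > 0" by simp
    then show ?thesis using ge g0 t by (smt (verit) mult_nonneg_nonneg)
  next
    case True
    have "a x0 \<noteq> 0" using x0 unfolding a_def by simp
    then have "qf (\<lambda>x y. norm (x - y)) A a < 0" by (rule strict_cnd[OF fA True x0(1)])
    then have "qf gk A a > 0" unfolding qf_gk using True by simp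
    then show ?thesis using ge t True by (smt (verit) mult_pos_pos zero_le_power2)
  qed
qed


lemma zeta_sym: "symk (zeta t) A"
  unfolding symk_def zeta_def by (simp add: norm_minus_commute)

lemma weighting_props:
  fixes A :: "(real^'n) set"
  assumes "t > 0" "finite A"
  shows "(\<forall>x\<in>A. (\<Sum>y\<in>A. zeta t x y * weighting t A y) = 1) \<and> (\<forall>x. x \<notin> A \<longrightarrow> weighting t A x = 0)"
proof -
  have sp: "spd (zeta t) A" using zeta_spd assms by blast
  let ?P = "\<lambda>w. (\<forall>x\<in>A. (\<Sum>y\<in>A. zeta t x y * w y) = 1) \<and> (\<forall>x. x \<notin> A \<longrightarrow> w x = 0)"
  obtain w where w: "?P w" using solve_exists[OF assms(2) zeta_sym sp, of "\<lambda>_. 1"] by blast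
  have "\<exists>!w. ?P w"
  proof (rule ex1I[of _ w])
    show "?P w" by fact
    fix w' assume "?P w'"
    then show "w' = w" using solve_unique[OF assms(2) sp, of w' "\<lambda>_. 1" w] w by blast
  qed
  then have "?P (THE w. ?P w)" by (rule theI')
  then show ?thesis unfolding weighting_def .
qed

theorem lemmaB3:
  fixes X Y :: "(real^'n) set" and t :: real
  assumes "t > 0" and "finite X" and "finite Y"
  shows "magnitude_equivalent t X Y \<longleftrightarrow>
           ((\<forall>z\<in>X \<inter> Y. weighting t X z = weighting t Y z) \<and>
            (\<forall>z\<in>X - (X \<inter> Y). weighting t X z = 0) \<and>
            (\<forall>z\<in>Y - (X \<inter> Y). weighting t Y z = 0))"
proof
  assume "magnitude_equivalent t X Y"
  hence S: "wsupp t X = wsupp t Y" unfolding magnitude_equivalent_def .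
  define S where "S = wsupp t X"
  have SX: "S \<subseteq> X" "S \<subseteq> Y" using S unfolding S_def wsupp_def by auto
  have fS: "finite S" using SX assms(2) finite_subset by blast
  obtain WX: "\<forall>x\<in>X. (\<Sum>y\<in>X. zeta t x y * weighting t X y) = 1" "\<forall>x. x \<notin> X \<longrightarrow> weighting t X x = 0"
    using weighting_props[OF assms(1,2)] by blast
  obtain WY: "\<forall>x\<in>Y. (\<Sum>y\<in>Y. zeta t x y * weighting t Y y) = 1" "\<forall>x. x \<notin> Y \<longrightarrow> weighting t Y x = 0"
    using weighting_props[OF assms(1,3)] by blast
  have zX: "weighting t X x = 0" if "x \<notin> S" for x
    using that WX(2) unfolding S_def wsupp_def by auto
  have SY: "S = wsupp t Y" unfolding S_def using S .
  have zY: "weighting t Y x = 0" if "x \<notin> S" for x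
    using that WY(2) unfolding SY wsupp_def by auto
  have eX: "(\<Sum>y\<in>S. zeta t x y * weighting t X y) = 1" if "x \<in> S" for x
  proof -
    have "(\<Sum>y\<in>S. zeta t x y * weighting t X y) = (\<Sum>y\<in>X. zeta t x y * weighting t X y)"
      by (rule sum.mono_neutral_left) (use assms(2) SX zX in auto)
    then show ?thesis using WX(1) SX that by auto
  qed
  have eY: "(\<Sum>y\<in>S. zeta t x y * weighting t Y y) = 1" if "x \<in> S" for x
  proof -
    have "(\<Sum>y\<in>S. zeta t x y * weighting t Y y) = (\<Sum>y\<in>Y. zeta t x y * weighting t Y y)"
      by (rule sum.mono_neutral_left) (use assms(3) SX zY in auto)
    then show ?thesis using WY(1) SX that by auto
  qed
  have "weighting t X = weighting t Y"
    by (rule solve_unique[OF fS zeta_spd[OF assms(1) fS], of _ "\<lambda>_. 1"]) (use eX eY zX zY in auto)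
  then show "(\<forall>z\<in>X \<inter> Y. weighting t X z = weighting t Y z) \<and>
            (\<forall>z\<in>X - (X \<inter> Y). weighting t X z = 0) \<and>
            (\<forall>z\<in>Y - (X \<inter> Y). weighting t Y z = 0)"
    using SX zX zY by auto
next
  assume H: "(\<forall>z\<in>X \<inter> Y. weighting t X z = weighting t Y z) \<and>
            (\<forall>z\<in>X - (X \<inter> Y). weighting t X z = 0) \<and>
            (\<forall>z\<in>Y - (X \<inter> Y). weighting t Y z = 0)"
  show "magnitude_equivalent t X Y"
    unfolding magnitude_equivalent_def wsupp_def using H by auto
qed

end
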